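(* Let $v\in C(S^1,(0,\infty))$ be separable in $S^1$ with $\max_{S^1}v>\min_{S^1}v$. Let $\alpha_0\in[0,2\pi)$ be such that the set of maximum points of $v$ equals $\{(\cos(\alpha_0+\theta),\sin(\alpha_0+\theta)):|\theta|\le\theta_1\}$ for some $\theta_1\in[0,\pi)$ (such $\alpha_0$ exists, and is the angle of the center of the arc of maximum points). Then for every $\alpha\in\mathbb{R}$: if $(\cos\alpha_0,\sin\alpha_0)\in S^1_\alpha$, then $v(x)\ge v(l_\alpha(x))$ for all $x\in S^1_\alpha$; and if $(\cos\alpha_0,\sin\alpha_0)\in S^1\setminus S^1_\alpha$, then $v(x)\le v(l_\alpha(x))$ for all $x\in S^1_\alpha$.
   Context: $S^1\subset\mathbb{R}^2$ is the unit circle. For $\alpha\in\mathbb{R}$, $S^1_\alpha=\{(\cos(\alpha+\theta),\sin(\alpha+\theta)):\theta\in(0,\pi)\}$, and for $x\in S^1$, $l_\alpha(x)$ denotes the reflection of $x$ across the line through the origin with direction $(\cos\alpha,\sin\alpha)$. A function $v\in C(S^1,\mathbb{R})$ is called separable in $S^1$ if for every $\alpha\in[0,2\pi)$, either $v(l_\alpha(x))\ge v(x)$ for all $x\in S^1_\alpha$, or $v(l_\alpha(x))\le v(x)$ for all $x\in S^1_\alpha$. *)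

theory Defs
  imports "HOL-Analysis.Analysis"
begin

definition S1 :: "(real \<times> real) set" where
  "S1 = {(x, y). x\<^sup>2 + y\<^sup>2 = 1}"

definition S1_arc :: "real \<Rightarrow> (real \<times> real) set" where
  "S1_arc \<alpha> = {(cos (\<alpha> + \<theta>), sin (\<alpha> + \<theta>)) | \<theta>. 0 < \<theta> \<and> \<theta> < pi}"

text \<open>Reflection across the line through the origin with direction (cos a, sin a):
  x maps to 2 (x . d) d - x.\<close>
definition refl_line :: "real \<Rightarrow> real \<times> real \<Rightarrow> real \<times> real" where
  "refl_line \<alpha> p = (let s = fst p * cos \<alpha> + snd p * sin \<alpha>
                     in (2 * s * cos \<alpha> - fst p, 2 * s * sin \<alpha> - snd p))"

definition separable_S1 :: "(real \<times> real \<Rightarrow> real) \<Rightarrow> bool" where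
  "separable_S1 v \<longleftrightarrow>
     (\<forall>\<alpha>\<in>{0..<2*pi}. (\<forall>x\<in>S1_arc \<alpha>. v (refl_line \<alpha> x) \<ge> v x)
                     \<or> (\<forall>x\<in>S1_arc \<alpha>. v (refl_line \<alpha> x) \<le> v x))"

end

theory Submission
  imports Defs
begin

lemma refl_P: "refl_line a (cos t, sin t) = (cos (2*a - t), sin (2*a - t))"
proof -
  have c: "cos (2*a - t) = (2*(cos a)^2-1) * cos t + 2 * sin a * cos a * sin t"
    by (simp add: cos_diff cos_double_cos sin_double)
  have s: "sin (2*a - t) = 2 * sin a * cos a * cos t - (2*(cos a)^2-1) * sin t"
    by (simp add: sin_diff cos_double_cos sin_double)
  have e: "cos a * cos a + sin a * sin a = 1" by (rule sin_cos_squared_add3)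
  show ?thesis unfolding refl_line_def Let_def c s prod.inject fst_conv snd_conv power2_eq_square
    using e by algebra
qed

lemma cos_per: "cos ((t::real) + 2 * pi * of_int (k::int)) = cos t"
  and sin_per: "sin ((t::real) + 2 * pi * of_int (k::int)) = sin t"
  by (metis sin_cos_eq_iff)+

lemma P_eq: "(cos a, sin a) = (cos b, sin b) \<Longrightarrow> \<exists>k::int. a = b + 2*pi*k"
  using sin_cos_eq_iff by auto

lemma S1_P: "x \<in> S1 \<Longrightarrow> \<exists>t. x = (cos t, sin t)"
  unfolding S1_def by (auto elim: sincos_total_2pi)

lemma P_S1: "(cos t, sin t) \<in> S1"
  unfolding S1_def by simp

lemma refl_pi: "refl_line (a + pi) = refl_line a"
  unfolding refl_line_def by (auto simp: fun_eq_iff Let_def algebra_simps)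

lemma refl_per: "refl_line (a + 2*pi * of_int (k::int)) = refl_line a"
  unfolding refl_line_def by (auto simp: fun_eq_iff Let_def cos_per sin_per)

lemma arc_per: "S1_arc (a + 2*pi * of_int (k::int)) = S1_arc a"
proof -
  have "\<And>t. (cos (a + 2*pi * of_int k + t), sin (a + 2*pi * of_int k + t)) = (cos (a+t), sin (a+t))"
    using cos_per[of "a+_" k] sin_per[of "a+_" k] by (simp add: algebra_simps)
  then show ?thesis unfolding S1_arc_def by simp
qed

lemma sep': assumes "separable_S1 v"
  shows "(\<forall>x\<in>S1_arc \<alpha>. v (refl_line \<alpha> x) \<ge> v x) \<or> (\<forall>x\<in>S1_arc \<alpha>. v (refl_line \<alpha> x) \<le> v x)"
proof -
  define k where "k = floor (\<alpha> / (2*pi))"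
  define a where "a = \<alpha> - 2*pi * of_int k"
  have "k \<le> \<alpha> / (2*pi)" "\<alpha> / (2*pi) < k + 1" unfolding k_def by linarith+
  hence "a \<in> {0..<2*pi}" unfolding a_def by (auto simp: field_simps)
  moreover have "\<alpha> = a + 2*pi * of_int k" unfolding a_def by simp
  ultimately show ?thesis using assms unfolding separable_S1_def
    by (metis arc_per refl_per)
qed

lemma part1:
  fixes v :: "real \<times> real \<Rightarrow> real" and \<alpha>0 \<theta>1 \<alpha> :: real
  assumes sep: "separable_S1 v"
    and \<theta>1: "\<theta>1 \<in> {0..<pi}"
    and maxset: "{x\<in>S1. \<forall>y\<in>S1. v y \<le> v x}
                 = {(cos (\<alpha>0 + \<theta>), sin (\<alpha>0 + \<theta>)) | \<theta>. \<bar>\<theta>\<bar> \<le> \<theta>1}"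
    and inarc: "(cos \<alpha>0, sin \<alpha>0) \<in> S1_arc \<alpha>"
  shows "\<forall>x\<in>S1_arc \<alpha>. v x \<ge> v (refl_line \<alpha> x)"
proof -
  obtain \<theta> where th: "0 < \<theta>" "\<theta> < pi" "(cos \<alpha>0, sin \<alpha>0) = (cos (\<alpha>+\<theta>), sin (\<alpha>+\<theta>))"
    using inarc unfolding S1_arc_def by auto
  obtain k :: int where k: "\<alpha>0 = \<alpha> + \<theta> + 2*pi * of_int k" using P_eq[OF th(3)] by auto
  define s where "s = (if \<theta>+\<theta>1 < pi then \<theta>+\<theta>1 else (\<bar>\<theta>1-\<theta>\<bar> + (2*pi-\<theta>1-\<theta>))/2)"
  have sv: "(\<theta>+\<theta>1<pi \<and> s = \<theta>+\<theta>1) \<or> (\<not>\<theta>+\<theta>1<pi \<and> \<theta>1 \<le> \<theta> \<and> s = pi-\<theta>1) \<or> (\<not>\<theta>+\<theta>1<pi \<and> \<theta> < \<theta>1 \<and> s = pi-\<theta>)"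
    unfolding s_def by (auto simp: field_simps abs_if)
  have s: "0 < s" "s < pi" "\<bar>s-\<theta>\<bar> \<le> \<theta>1" "\<theta>1 < s+\<theta>" "s+\<theta> < 2*pi-\<theta>1"
    using sv \<theta>1 th(1,2) by (auto simp: abs_if)
  define y where "y = (cos (\<alpha>+s), sin (\<alpha>+s))"
  have yarc: "y \<in> S1_arc \<alpha>" unfolding y_def S1_arc_def using s by auto
  have "\<alpha>0 + (s - \<theta>) = (\<alpha> + s) + 2*pi * of_int k" using k by simp
  hence "y = (cos (\<alpha>0 + (s - \<theta>)), sin (\<alpha>0 + (s - \<theta>)))" unfolding y_def
    by (simp only: cos_per sin_per)
  hence yM: "y \<in> {x\<in>S1. \<forall>y\<in>S1. v y \<le> v x}" unfolding maxset using s(3) by blast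
  have ry: "refl_line \<alpha> y = (cos (\<alpha> - s), sin (\<alpha> - s))" unfolding y_def refl_P
    by (simp add: algebra_simps)
  have ryM: "refl_line \<alpha> y \<notin> {x\<in>S1. \<forall>y\<in>S1. v y \<le> v x}"
  proof
    assume "refl_line \<alpha> y \<in> {x\<in>S1. \<forall>y\<in>S1. v y \<le> v x}"
    then obtain \<phi> where ph: "\<bar>\<phi>\<bar> \<le> \<theta>1" "(cos (\<alpha> - s), sin (\<alpha> - s)) = (cos (\<alpha>0+\<phi>), sin (\<alpha>0+\<phi>))"
      unfolding maxset ry by auto
    obtain m :: int where m: "\<alpha> - s = \<alpha>0 + \<phi> + 2*pi * of_int m" using P_eq[OF ph(2)] by auto
    have "-(s+\<theta>+\<phi>) = 2*pi * of_int (k+m)" using m k by (simp add: algebra_simps)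
    moreover have "-(s+\<theta>+\<phi>) < 0" "-(s+\<theta>+\<phi>) > -2*pi" using s ph(1) by auto
    ultimately have a1: "2*pi * of_int (k+m) < 2*pi*0" and a2: "2*pi*(-1) < 2*pi * of_int (k+m)" by linarith+
    have "of_int (k+m) < (0::real)" using a1 mult_less_cancel_left_pos[OF pi_gt_zero] by (metis mult_less_cancel_left_pos pi_gt_zero zero_less_mult_iff zero_less_numeral)
    moreover have "of_int (k+m) > (-1::real)" using a2 by (metis mult.assoc mult_less_cancel_left_pos pi_gt_zero zero_less_numeral zero_less_mult_iff)
    ultimately
    have "k+m < 0" "k+m > -1" by linarith+
    thus False by linarith
  qed
  have "refl_line \<alpha> y \<in> S1" unfolding ry by (rule P_S1)
  with ryM obtain z where "z \<in> S1" "v z > v (refl_line \<alpha> y)" by force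
  with yM have lt: "v (refl_line \<alpha> y) < v y" by force
  from sep'[OF sep, of \<alpha>] yarc lt show ?thesis by force
qed

lemma arc_mem: "0 < \<theta> \<Longrightarrow> \<theta> < pi \<Longrightarrow> a = b + \<theta> + 2*pi * of_int (k::int) \<Longrightarrow> (cos a, sin a) \<in> S1_arc b"
  unfolding S1_arc_def using cos_per[of "b+\<theta>" k] sin_per[of "b+\<theta>" k] by auto

lemma opp:
  fixes v :: "real \<times> real \<Rightarrow> real" and \<alpha>0 \<theta>1 \<gamma> :: real
  assumes sep: "separable_S1 v"
    and \<theta>1: "\<theta>1 \<in> {0..<pi}"
    and maxset: "{x\<in>S1. \<forall>y\<in>S1. v y \<le> v x}
                 = {(cos (\<alpha>0 + \<theta>), sin (\<alpha>0 + \<theta>)) | \<theta>. \<bar>\<theta>\<bar> \<le> \<theta>1}"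
    and inarc: "(cos \<alpha>0, sin \<alpha>0) \<in> S1_arc (\<gamma>+pi)"
  shows "\<forall>x\<in>S1_arc \<gamma>. v x \<le> v (refl_line \<gamma> x)"
proof
  fix x assume "x \<in> S1_arc \<gamma>"
  then obtain t where t: "0<t" "t<pi" "x = (cos (\<gamma>+t), sin (\<gamma>+t))" unfolding S1_arc_def by auto
  have w: "refl_line \<gamma> x = (cos (\<gamma> - t), sin (\<gamma> - t))" unfolding t refl_P by (simp add: algebra_simps)
  have "refl_line \<gamma> x \<in> S1_arc (\<gamma>+pi)" unfolding w
    by (rule arc_mem[of "pi - t" _ _ "-1"]) (use t in auto)
  moreover have "refl_line (\<gamma>+pi) (refl_line \<gamma> x) = x" unfolding refl_pi w refl_P t
    by (simp add: algebra_simps)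
  ultimately show "v x \<le> v (refl_line \<gamma> x)"
    using part1[OF sep \<theta>1 maxset inarc] by metis
qed

theorem corollary2p1:
  fixes v :: "real \<times> real \<Rightarrow> real" and \<alpha>0 \<theta>1 :: real
  assumes cont: "continuous_on S1 v"
    and pos: "\<forall>x\<in>S1. v x > 0"
    and sep: "separable_S1 v"
    and nonconst: "(SUP x\<in>S1. v x) > (INF x\<in>S1. v x)"
    and \<alpha>0: "\<alpha>0 \<in> {0..<2*pi}"
    and \<theta>1: "\<theta>1 \<in> {0..<pi}"
    and maxset: "{x\<in>S1. \<forall>y\<in>S1. v y \<le> v x}
                 = {(cos (\<alpha>0 + \<theta>), sin (\<alpha>0 + \<theta>)) | \<theta>. \<bar>\<theta>\<bar> \<le> \<theta>1}"
  shows "\<forall>\<alpha>::real.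
           ((cos \<alpha>0, sin \<alpha>0) \<in> S1_arc \<alpha> \<longrightarrow> (\<forall>x\<in>S1_arc \<alpha>. v x \<ge> v (refl_line \<alpha> x)))
         \<and> ((cos \<alpha>0, sin \<alpha>0) \<in> S1 - S1_arc \<alpha> \<longrightarrow> (\<forall>x\<in>S1_arc \<alpha>. v x \<le> v (refl_line \<alpha> x)))"
proof (intro allI conjI impI)
  fix \<alpha> :: real
  show "(cos \<alpha>0, sin \<alpha>0) \<in> S1_arc \<alpha> \<Longrightarrow> \<forall>x\<in>S1_arc \<alpha>. v x \<ge> v (refl_line \<alpha> x)"
    using part1[OF sep \<theta>1 maxset] by blast
  assume notin: "(cos \<alpha>0, sin \<alpha>0) \<in> S1 - S1_arc \<alpha>"
  define k where "k = floor ((\<alpha>0-\<alpha>) / (2*pi))"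
  define r where "r = \<alpha>0 - \<alpha> - 2*pi * of_int k"
  have "k \<le> (\<alpha>0-\<alpha>) / (2*pi)" "(\<alpha>0-\<alpha>) / (2*pi) < k + 1" unfolding k_def by linarith+
  hence r: "0 \<le> r" "r < 2*pi" unfolding r_def by (auto simp: field_simps)
  have ak: "\<alpha>0 = \<alpha> + r + 2*pi * of_int k" unfolding r_def by simp
  have "\<not> (0 < r \<and> r < pi)" using arc_mem[OF _ _ ak] notin by auto
  hence rc: "pi < r \<or> r = 0 \<or> r = pi" using r by auto
  show "\<forall>x\<in>S1_arc \<alpha>. v x \<le> v (refl_line \<alpha> x)"
  proof (cases "pi < r")
    case True
    have "(cos \<alpha>0, sin \<alpha>0) \<in> S1_arc (\<alpha>+pi)"
      by (rule arc_mem[of "r - pi" _ _ k]) (use True r ak in auto)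
    then show ?thesis using opp[OF sep \<theta>1 maxset] by blast
  next
    case False
    hence r0: "r = 0 \<or> r = pi" using rc by auto
    show ?thesis
    proof (rule ccontr)
      assume "\<not> ?thesis"
      then obtain x where x: "x \<in> S1_arc \<alpha>" "v x > v (refl_line \<alpha> x)" by force
      then obtain t where t: "0<t" "t<pi" "x = (cos (\<alpha>+t), sin (\<alpha>+t))" unfolding S1_arc_def by auto
      define g where "g = (\<lambda>\<delta>::real. v (cos (\<alpha> - t + 2*\<delta>), sin (\<alpha> - t + 2*\<delta>)))"
      have "continuous_on UNIV g" unfolding g_def
        by (rule continuous_on_compose2[OF cont]) (auto intro!: continuous_intros simp: P_S1)
      hence "continuous (at 0) g" by (simp add: continuous_on_eq_continuous_at)
      moreover have rx: "refl_line \<alpha> x = (cos (\<alpha> - t), sin (\<alpha> - t))" unfolding t refl_P by (simp add: algebra_simps)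
      have e: "v x - g 0 > 0" using x(2) unfolding rx g_def by simp
      ultimately obtain d where d: "d > 0" "\<And>x'. dist x' 0 < d \<Longrightarrow> dist (g x') (g 0) < v x - g 0"
        unfolding continuous_at_eps_delta by metis
      define m where "m = min d (min t (pi - t)) / 2"
      have m: "0 < m" "m < d" "m < t" "m < pi - t" using d t unfolding m_def by auto
      obtain \<delta> where dl: "\<bar>\<delta>\<bar> < d" "0 < t - \<delta>" "t - \<delta> < pi" "(cos \<alpha>0, sin \<alpha>0) \<in> S1_arc (\<alpha>+\<delta>+pi)"
      proof (cases "r = 0")
        case True
        show ?thesis
          by (rule that[of m]) (use m ak True in \<open>auto intro!: arc_mem[of "pi - m" _ _ "k-1"] simp: algebra_simps\<close>)
      next
        case False
        hence "r = pi" using r0 by auto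
        have "(cos \<alpha>0, sin \<alpha>0) \<in> S1_arc (\<alpha> + - m + pi)"
          by (rule arc_mem[of m _ _ k]) (use m ak \<open>r = pi\<close> in auto)
        show ?thesis
          by (rule that[of "-m"]) (use m \<open>(cos \<alpha>0, sin \<alpha>0) \<in> S1_arc (\<alpha> + - m + pi)\<close> in auto)
      qed
      have "x \<in> S1_arc (\<alpha>+\<delta>)" unfolding t by (rule arc_mem[of "t-\<delta>" _ _ 0]) (use dl in auto)
      hence "v x \<le> v (refl_line (\<alpha>+\<delta>) x)" using opp[OF sep \<theta>1 maxset dl(4)] by blast
      also have "refl_line (\<alpha>+\<delta>) x = (cos (\<alpha> - t + 2*\<delta>), sin (\<alpha> - t + 2*\<delta>))"
        unfolding t refl_P by (simp add: algebra_simps)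
      finally have "v x \<le> g \<delta>" unfolding g_def .
      moreover have "dist (g \<delta>) (g 0) < v x - g 0" using d(2)[of \<delta>] dl(1) by simp
      ultimately show False by (simp add: dist_real_def)
    qed
  qed
qed
end
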